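(* Let $n,m\ge 1$, let $G\in\mathbb{R}^{2n\times 2n}$ be symmetric, let $C\in\mathbb{R}^{2m\times 2n}$, and set $A=\Sigma_n(G+C^\top\Sigma_m C/2)$. Define the controllability matrix $\mathcal{C}=(\Sigma_n C^\top\Sigma_m,\ A\Sigma_n C^\top\Sigma_m,\ \ldots,\ A^{2n-1}\Sigma_n C^\top\Sigma_m)$ and the observability matrix $\mathcal{O}=(C^\top,\ A^\top C^\top,\ \ldots,\ (A^\top)^{2n-1}C^\top)^\top$. Then for every vector $v\in\mathbb{R}^{2n}$, $$\Sigma_n v\in \mathrm{Ker}(\mathcal{O}) \iff v\in\mathrm{Ker}(\mathcal{C}^\top).$$
   Context: For $k\ge1$, $\Sigma_k$ denotes the $2k\times 2k$ block-diagonal matrix $\mathrm{diag}\{\Sigma,\ldots,\Sigma\}$ with $\Sigma=\begin{pmatrix}0&1\\-1&0\end{pmatrix}$. These matrices describe a linear quantum system $d\hat x=A\hat x\,dt+\Sigma_nC^\top\Sigma_m\,d\hat{\mathcal W}$, $d\hat{\mathcal W}^{\rm out}=C\hat x\,dt+d\hat{\mathcal W}$, where $\hat x$ is the vector of $n$ canonical position/momentum pairs, $\hat{\mathcal W}$ the input noise quadratures and $\hat{\mathcal W}^{\rm out}$ the output quadratures. *)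

theory Defs
  imports "Jordan_Normal_Form.Matrix_Kernel"
begin

text \<open>Sigma_k = diag(Sigma,...,Sigma), Sigma = [[0,1],[-1,0]], a 2k x 2k matrix (indices from 0).\<close>
definition Sigma_mat :: "nat \<Rightarrow> real mat" where
  "Sigma_mat k = mat (2*k) (2*k) (\<lambda>(i,j).
      if even i \<and> j = i + 1 then 1
      else if odd i \<and> j + 1 = i then -1 else 0)"

definition sys_A :: "nat \<Rightarrow> nat \<Rightarrow> real mat \<Rightarrow> real mat \<Rightarrow> real mat" where
  "sys_A n m G C = Sigma_mat n * (G + (1/2) \<cdot>\<^sub>m (transpose_mat C * Sigma_mat m * C))"

definition sys_B :: "nat \<Rightarrow> nat \<Rightarrow> real mat \<Rightarrow> real mat" where
  "sys_B n m C = Sigma_mat n * transpose_mat C * Sigma_mat m"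

text \<open>Controllability matrix (B, A B, ..., A^(2n-1) B), of size 2n x (2n * 2m):
  column j lies in block j div (2m), column j mod (2m) of that block.\<close>
definition ctrb_mat :: "nat \<Rightarrow> nat \<Rightarrow> real mat \<Rightarrow> real mat \<Rightarrow> real mat" where
  "ctrb_mat n m G C = mat (2*n) (2*n*(2*m)) (\<lambda>(i,j).
      ((sys_A n m G C ^\<^sub>m (j div (2*m))) * sys_B n m C) $$ (i, j mod (2*m)))"

text \<open>Observability matrix (C^T, A^T C^T, ..., (A^T)^(2n-1) C^T)^T, of size (2n * 2m) x 2n;
  its k-th row block is ((A^T)^k C^T)^T = C A^k.\<close>
definition obsv_mat :: "nat \<Rightarrow> nat \<Rightarrow> real mat \<Rightarrow> real mat \<Rightarrow> real mat" where
  "obsv_mat n m G C = mat (2*n*(2*m)) (2*n) (\<lambda>(i,j).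
      transpose_mat ((transpose_mat (sys_A n m G C)) ^\<^sub>m (i div (2*m)) * transpose_mat C)
        $$ (i mod (2*m), j))"

end

theory Submission imports Defs begin

lemma Sigma_carrier[simp]: "Sigma_mat k \<in> carrier_mat (2*k) (2*k)"
  unfolding Sigma_mat_def by auto

lemma Sigma_dim[simp]: "dim_row (Sigma_mat k) = 2*k" "dim_col (Sigma_mat k) = 2*k"
  unfolding Sigma_mat_def by auto

lemma Sigma_vec_carrier[simp]: "x \<in> carrier_vec (2*k) \<Longrightarrow> Sigma_mat k *\<^sub>v x \<in> carrier_vec (2*k)"
  by (rule mult_mat_vec_carrier[OF Sigma_carrier])

lemma Sigma_transpose: "transpose_mat (Sigma_mat k) = - Sigma_mat k"
  unfolding Sigma_mat_def
  apply (rule eq_matI)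
  apply (simp add: uminus_mat_def)
  apply (intro conjI impI; presburger)
  by auto

lemma Sigma_mult_vec:
  assumes x: "x \<in> carrier_vec (2*k)" and i: "i < 2*k"
  shows "(Sigma_mat k *\<^sub>v x) $ i = (if even i then x $ (i+1) else - x $ (i-1))"
proof (cases "even i")
  case True
  have i1: "i+1 < 2*k" using True i by presburger
  have "(Sigma_mat k *\<^sub>v x) $ i = (\<Sum>j\<in>{0..<2*k}. Sigma_mat k $$ (i,j) * x $ j)"
    using i x by (simp add: scalar_prod_def)
  also have "\<dots> = (\<Sum>j\<in>{0..<2*k}. (if j = i+1 then x $ j else 0))"
    by (rule sum.cong) (use True i in \<open>auto simp: Sigma_mat_def\<close>)
  also have "\<dots> = x $ (i+1)" using i1 by (simp add: sum.delta)
  finally show ?thesis using True by simp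
next
  case False
  have i1: "i-1 < 2*k" "i \<ge> 1" using False i by presburger+
  have "(Sigma_mat k *\<^sub>v x) $ i = (\<Sum>j\<in>{0..<2*k}. Sigma_mat k $$ (i,j) * x $ j)"
    using i x by (simp add: scalar_prod_def)
  also have "\<dots> = (\<Sum>j\<in>{0..<2*k}. (if j = i-1 then - x $ j else 0))"
    by (rule sum.cong) (use False i in \<open>auto simp: Sigma_mat_def\<close>)
  also have "\<dots> = - x $ (i-1)" using i1 by (simp add: sum.delta)
  finally show ?thesis using False by simp
qed

lemma Sigma_Sigma_vec:
  assumes x: "x \<in> carrier_vec (2*k)"
  shows "Sigma_mat k *\<^sub>v (Sigma_mat k *\<^sub>v x) = - x"
proof (rule eq_vecI)
  fix i assume "i < dim_vec (- x)"
  hence i: "i < 2*k" using x by auto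
  have c: "Sigma_mat k *\<^sub>v x \<in> carrier_vec (2*k)" by (rule mult_mat_vec_carrier[OF Sigma_carrier x])
  show "(Sigma_mat k *\<^sub>v (Sigma_mat k *\<^sub>v x)) $ i = (- x) $ i"
  proof (cases "even i")
    case True
    hence "i+1 < 2*k" "odd (i+1)" using i by presburger+
    then show ?thesis using True i x Sigma_mult_vec[OF c i] Sigma_mult_vec[OF x] by simp
  next
    case False
    hence "i-1 < 2*k" "even (i-1)" "i - 1 + 1 = i" using i by presburger+
    then show ?thesis using False i x Sigma_mult_vec[OF c i] Sigma_mult_vec[OF x] by simp
  qed
qed (use x in auto)

lemma smult_mat_vec_assoc: "A \<in> carrier_mat nr nc \<Longrightarrow> v \<in> carrier_vec nc \<Longrightarrow> (c \<cdot>\<^sub>m A) *\<^sub>v v = c \<cdot>\<^sub>v (A *\<^sub>v v)"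
  apply (rule eq_vecI)
   apply auto
  apply (rule smult_scalar_prod_distrib[of _ nc])
  by auto

lemma transpose_smult: "transpose_mat (c \<cdot>\<^sub>m A) = c \<cdot>\<^sub>m transpose_mat A"
  by (rule eq_matI) auto

lemma pow_mat_Suc': assumes A: "A \<in> carrier_mat n n" shows "A ^\<^sub>m Suc k = A * A ^\<^sub>m k"
proof (induction k)
  case 0 then show ?case using A by simp
next
  case (Suc k)
  have "A ^\<^sub>m Suc (Suc k) = (A * A ^\<^sub>m k) * A" using Suc by simp
  also have "\<dots> = A * (A ^\<^sub>m k * A)" using A by (simp add: assoc_mult_mat[of _ n n _ n _ n])
  finally show ?case by simp
qed

lemma transpose_pow: fixes A :: "'a::comm_ring_1 mat" assumes A: "A \<in> carrier_mat n n"
  shows "transpose_mat (A ^\<^sub>m k) = (transpose_mat A) ^\<^sub>m k"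
proof (induction k)
  case 0 then show ?case using A by simp
next
  case (Suc k)
  have "transpose_mat (A ^\<^sub>m Suc k) = transpose_mat A * transpose_mat (A ^\<^sub>m k)"
    using A by (simp add: transpose_mult[OF pow_carrier_mat[OF A] A])
  also have "\<dots> = transpose_mat A * (transpose_mat A) ^\<^sub>m k" using Suc by simp
  also have "\<dots> = (transpose_mat A) ^\<^sub>m Suc k"
    by (rule pow_mat_Suc'[symmetric]) (use A in simp)
  finally show ?case .
qed

lemma block_kernel:
  assumes F: "\<And>k. k < N \<Longrightarrow> F k \<in> carrier_mat M K" and M: "M > 0"
  shows "w \<in> mat_kernel (mat (N*M) K (\<lambda>(i,j). F (i div M) $$ (i mod M, j)))
     \<longleftrightarrow> w \<in> carrier_vec K \<and> (\<forall>k<N. F k *\<^sub>v w = 0\<^sub>v M)"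
proof -
  let ?X = "mat (N*M) K (\<lambda>(i,j). F (i div M) $$ (i mod M, j))"
  have ent: "(?X *\<^sub>v w) $ i = (F (i div M) *\<^sub>v w) $ (i mod M)"
    if i: "i < N*M" and w: "w \<in> carrier_vec K" for i w
  proof -
    have d: "i div M < N" using i M by (simp add: less_mult_imp_div_less)
    have r: "i mod M < M" using M by simp
    show ?thesis using F[OF d] i r w
      by (simp add: scalar_prod_def row_def)
  qed
  show ?thesis
  proof
    assume "w \<in> mat_kernel ?X"
    hence w: "w \<in> carrier_vec K" and z: "?X *\<^sub>v w = 0\<^sub>v (N*M)" unfolding mat_kernel_def by auto
    have "F k *\<^sub>v w = 0\<^sub>v M" if k: "k < N" for k
    proof (rule eq_vecI)
      fix r assume "r < dim_vec (0\<^sub>v M :: 'a vec)"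
      hence r: "r < M" by simp
      have i: "k*M + r < N*M"
      proof -
        have "k*M + r < k*M + M" using r by simp
        also have "\<dots> = Suc k * M" by simp
        also have "\<dots> \<le> N * M" using k by (intro mult_right_mono) auto
        finally show ?thesis .
      qed
      have "(k*M + r) div M = k" "(k*M+r) mod M = r" using r by auto
      with ent[OF i w] z i show "(F k *\<^sub>v w) $ r = (0\<^sub>v M) $ r" using r
        by (metis index_zero_vec(1))
    qed (use F[OF k] in auto)
    with w show "w \<in> carrier_vec K \<and> (\<forall>k<N. F k *\<^sub>v w = 0\<^sub>v M)" by auto
  next
    assume a: "w \<in> carrier_vec K \<and> (\<forall>k<N. F k *\<^sub>v w = 0\<^sub>v M)"
    have "?X *\<^sub>v w = 0\<^sub>v (N*M)"
    proof (rule eq_vecI)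
      fix i assume "i < dim_vec (0\<^sub>v (N*M) :: 'a vec)"
      hence i: "i < N*M" by simp
      have d: "i div M < N" using i M by (simp add: less_mult_imp_div_less)
      show "(?X *\<^sub>v w) $ i = (0\<^sub>v (N*M)) $ i"
        using ent[OF i] a d i M by simp
    qed simp
    with a show "w \<in> mat_kernel ?X" unfolding mat_kernel_def by auto
  qed
qed

lemma mult_uminus_vec: "A \<in> carrier_mat nr nc \<Longrightarrow> (v::'a::comm_ring_1 vec) \<in> carrier_vec nc \<Longrightarrow> A *\<^sub>v (- v) = - (A *\<^sub>v v)"
  by (rule eq_vecI) auto

lemma mult_zero_vec': "A \<in> carrier_mat nr nc \<Longrightarrow> A *\<^sub>v (0\<^sub>v nc :: 'a::comm_ring_1 vec) = 0\<^sub>v nr"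
  by (rule eq_vecI) auto

lemma seq_alt:
  fixes X Z B C :: "real mat" and x y :: "nat \<Rightarrow> real vec"
  assumes X: "X \<in> carrier_mat N N" and B: "B \<in> carrier_mat N M" and C: "C \<in> carrier_mat M N"
    and Z: "\<And>u. u \<in> carrier_vec N \<Longrightarrow> Z *\<^sub>v u = - (X *\<^sub>v u) + B *\<^sub>v (C *\<^sub>v u)"
    and xc: "\<And>k. x k \<in> carrier_vec N" and yc: "\<And>k. y k \<in> carrier_vec N"
    and xs: "\<And>k. x (Suc k) = X *\<^sub>v x k" and ys: "\<And>k. y (Suc k) = Z *\<^sub>v y k"
    and x0: "y 0 = x 0"
  shows "(\<forall>j\<le>k. C *\<^sub>v x j = 0\<^sub>v M) \<Longrightarrow> y k = (-1)^k \<cdot>\<^sub>v x k"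
proof (induction k)
  case 0 then show ?case using x0 xc[of 0] by simp
next
  case (Suc k)
  hence IH: "y k = (-1)^k \<cdot>\<^sub>v x k" and z: "C *\<^sub>v x k = 0\<^sub>v M" by auto
  have "y (Suc k) = - (X *\<^sub>v y k) + B *\<^sub>v (C *\<^sub>v y k)" using ys Z yc by simp
  also have "C *\<^sub>v y k = 0\<^sub>v M"
  proof -
    have "(-1)^k \<cdot>\<^sub>v 0\<^sub>v M = (0\<^sub>v M :: real vec)" by (rule eq_vecI) auto
    then show ?thesis unfolding IH using mult_mat_vec[OF C xc[of k]] z by simp
  qed
  also have "B *\<^sub>v 0\<^sub>v M = 0\<^sub>v N" using mult_zero_vec'[OF B] .
  also have "X *\<^sub>v y k = (-1)^k \<cdot>\<^sub>v x (Suc k)" unfolding IH xs using mult_mat_vec[OF X xc[of k]] by simp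
  finally show ?case using xc[of "Suc k"] by (intro eq_vecI) auto
qed

lemma key_identity:
  fixes G C :: "real mat" and x :: "real vec"
  assumes G: "G \<in> carrier_mat (2*n) (2*n)" and Gs: "transpose_mat G = G"
    and C: "C \<in> carrier_mat (2*m) (2*n)" and x: "x \<in> carrier_vec (2*n)"
  shows "Sigma_mat n *\<^sub>v (transpose_mat (sys_A n m G C) *\<^sub>v (Sigma_mat n *\<^sub>v x))
       = sys_A n m G C *\<^sub>v x - sys_B n m C *\<^sub>v (C *\<^sub>v x)"
proof -
  let ?S = "Sigma_mat n" and ?S' = "Sigma_mat m"
  define K where "K = transpose_mat C * ?S' * C"
  define H where "H = G + (1/2) \<cdot>\<^sub>m K"
  have S: "?S \<in> carrier_mat (2*n) (2*n)" and S': "?S' \<in> carrier_mat (2*m) (2*m)" by simp_all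
  have CT: "transpose_mat C \<in> carrier_mat (2*n) (2*m)" using C by simp
  have K: "K \<in> carrier_mat (2*n) (2*n)" unfolding K_def by (meson CT S' C mult_carrier_mat)
  have H: "H \<in> carrier_mat (2*n) (2*n)" unfolding H_def using G K by simp
  have Kx: "K *\<^sub>v x = transpose_mat C *\<^sub>v (?S' *\<^sub>v (C *\<^sub>v x))"
  proof -
    have CS: "transpose_mat C * ?S' \<in> carrier_mat (2*n) (2*m)" using CT S' by simp
    show ?thesis unfolding K_def
      using assoc_mult_mat_vec[OF CS C x] assoc_mult_mat_vec[OF CT S', of "C *\<^sub>v x"] C x by simp
  qed
  have KT: "transpose_mat K = - K"
  proof -
    have "transpose_mat K = transpose_mat C * transpose_mat (transpose_mat C * ?S')"
      unfolding K_def using C CT S' by (simp add: transpose_mult[of _ "2*n" "2*m" C "2*n"])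
    also have "transpose_mat (transpose_mat C * ?S') = transpose_mat ?S' * C"
      using C CT S' by (simp add: transpose_mult[of _ "2*n" "2*m" _ "2*m"])
    finally show ?thesis unfolding K_def Sigma_transpose
      using C CT S' by (simp add: assoc_mult_mat[of _ "2*n" "2*m" _ "2*m" _ "2*n"])
  qed
  have HT: "transpose_mat H = G + (1/2) \<cdot>\<^sub>m (- K)"
    unfolding H_def using G K by (simp add: transpose_add transpose_smult Gs KT)
  have A: "sys_A n m G C = ?S * H" unfolding sys_A_def H_def K_def ..
  have AT: "transpose_mat (sys_A n m G C) = - (transpose_mat H * ?S)"
    unfolding A using S H by (simp add: transpose_mult[OF S H] Sigma_transpose)
  have Sx: "?S *\<^sub>v x \<in> carrier_vec (2*n)" using S x by simp
  have HTc: "transpose_mat H \<in> carrier_mat (2*n) (2*n)" using H by simp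
  have "transpose_mat (sys_A n m G C) *\<^sub>v (?S *\<^sub>v x) = - (transpose_mat H *\<^sub>v (?S *\<^sub>v (?S *\<^sub>v x)))"
    unfolding AT using HTc S Sx assoc_mult_mat_vec[OF HTc S Sx] by simp
  also have "\<dots> = transpose_mat H *\<^sub>v x"
    unfolding Sigma_Sigma_vec[OF x] using mult_uminus_vec[OF HTc x] by simp
  also have "\<dots> = G *\<^sub>v x + (1/2) \<cdot>\<^sub>v (- (K *\<^sub>v x))"
    unfolding HT using G K x
    by (simp add: add_mult_distrib_mat_vec[of _ "2*n" "2*n"] smult_mat_vec_assoc[of _ "2*n" "2*n"])
  finally have L: "?S *\<^sub>v (transpose_mat (sys_A n m G C) *\<^sub>v (?S *\<^sub>v x))
     = ?S *\<^sub>v (G *\<^sub>v x) + (1/2) \<cdot>\<^sub>v (- (?S *\<^sub>v (K *\<^sub>v x)))"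
    using G K x S
    by (simp add: mult_add_distrib_mat_vec[of _ "2*n" "2*n"] mult_mat_vec[of _ "2*n" "2*n"] mult_uminus_vec[of _ "2*n" "2*n"])
  have R1: "sys_A n m G C *\<^sub>v x = ?S *\<^sub>v (G *\<^sub>v x) + (1/2) \<cdot>\<^sub>v (?S *\<^sub>v (K *\<^sub>v x))"
    unfolding A assoc_mult_mat_vec[OF S H x] unfolding H_def using G K x S
    by (simp add: add_mult_distrib_mat_vec[of _ "2*n" "2*n"] smult_mat_vec_assoc[of _ "2*n" "2*n"]
        mult_add_distrib_mat_vec[of _ "2*n" "2*n"] mult_mat_vec[of _ "2*n" "2*n"])
  have R2: "sys_B n m C *\<^sub>v (C *\<^sub>v x) = ?S *\<^sub>v (K *\<^sub>v x)"
  proof -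
    have Cx: "C *\<^sub>v x \<in> carrier_vec (2*m)" using C x by simp
    have SC: "?S * transpose_mat C \<in> carrier_mat (2*n) (2*m)" using S CT by (rule mult_carrier_mat)
    show ?thesis unfolding sys_B_def Kx
      using assoc_mult_mat_vec[OF SC S' Cx] assoc_mult_mat_vec[OF S CT, of "?S' *\<^sub>v (C *\<^sub>v x)"] S' Cx by simp
  qed
  have a: "?S *\<^sub>v (G *\<^sub>v x) \<in> carrier_vec (2*n)" and b: "?S *\<^sub>v (K *\<^sub>v x) \<in> carrier_vec (2*n)"
    using S G K x by simp_all
  show ?thesis unfolding L R1 R2 using a b by (intro eq_vecI) auto
qed

lemma vec_aux1: "(a::real vec) \<in> carrier_vec N \<Longrightarrow> b \<in> carrier_vec N \<Longrightarrow> a = -(-a + b) + b"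
  by (rule eq_vecI) auto

lemma vec_aux2: "(a::real vec) \<in> carrier_vec N \<Longrightarrow> b \<in> carrier_vec N \<Longrightarrow> -(a - b) = -a + b"
  by (rule eq_vecI) auto

theorem lemma1:
  fixes n m :: nat and G C :: "real mat" and v :: "real vec"
  assumes "n \<ge> 1" and "m \<ge> 1"
    and "G \<in> carrier_mat (2*n) (2*n)" and "transpose_mat G = G"
    and "C \<in> carrier_mat (2*m) (2*n)"
    and "v \<in> carrier_vec (2*n)"
  shows "Sigma_mat n *\<^sub>v v \<in> mat_kernel (obsv_mat n m G C)
     \<longleftrightarrow> v \<in> mat_kernel (transpose_mat (ctrb_mat n m G C))"
proof -
  note G = assms(3) and Gs = assms(4) and C = assms(5) and v = assms(6)
  define N where "N = 2*n"
  define M where "M = 2*m"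
  have M0: "M > 0" using assms(2) unfolding M_def by simp
  let ?S = "Sigma_mat n" and ?S' = "Sigma_mat m"
  define A where "A = sys_A n m G C"
  define B where "B = sys_B n m C"
  define P where "P = - A + B * C"
  have S: "?S \<in> carrier_mat N N" and S': "?S' \<in> carrier_mat M M" unfolding N_def M_def by simp_all
  have C': "C \<in> carrier_mat M N" using C unfolding N_def M_def .
  have G': "G \<in> carrier_mat N N" using G unfolding N_def .
  have CT: "transpose_mat C \<in> carrier_mat N M" using C' by simp
  have Ac: "A \<in> carrier_mat N N"
  proof -
    have "transpose_mat C * ?S' * C \<in> carrier_mat N N" by (meson CT S' C' mult_carrier_mat)
    then show ?thesis unfolding A_def sys_A_def using S G' by simp
  qed
  have Bc: "B \<in> carrier_mat N M" unfolding B_def sys_B_def by (meson CT S' S mult_carrier_mat)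
  have BC: "B * C \<in> carrier_mat N N" using Bc C' by simp
  have Pc: "P \<in> carrier_mat N N" unfolding P_def using Ac BC by simp
  have Pv: "P *\<^sub>v u = - (A *\<^sub>v u) + B *\<^sub>v (C *\<^sub>v u)" if u: "u \<in> carrier_vec N" for u
    unfolding P_def using Ac BC Bc C' u by (simp add: add_mult_distrib_mat_vec[of _ N N])
  have Av: "A *\<^sub>v u = - (P *\<^sub>v u) + B *\<^sub>v (C *\<^sub>v u)" if u: "u \<in> carrier_vec N" for u
  proof -
    have "A *\<^sub>v u \<in> carrier_vec N" "B *\<^sub>v (C *\<^sub>v u) \<in> carrier_vec N" using Ac Bc C' u by simp_all
    then show ?thesis unfolding Pv[OF u] by (rule vec_aux1)
  qed
  define y where "y k = A ^\<^sub>m k *\<^sub>v (?S *\<^sub>v v)" for k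
  define x where "x k = ?S *\<^sub>v (transpose_mat (A ^\<^sub>m k) *\<^sub>v v)" for k
  have vN: "v \<in> carrier_vec N" using v unfolding N_def .
  have Sv: "?S *\<^sub>v v \<in> carrier_vec N" using S vN by simp
  have yc: "y k \<in> carrier_vec N" for k unfolding y_def by (rule mult_mat_vec_carrier[OF pow_carrier_mat[OF Ac] Sv])
  have xc: "x k \<in> carrier_vec N" for k unfolding x_def
    by (rule mult_mat_vec_carrier[OF S mult_mat_vec_carrier[OF _ vN]]) (use Ac in simp)
  have ys: "y (Suc k) = A *\<^sub>v y k" for k
    unfolding y_def pow_mat_Suc'[OF Ac] by (rule assoc_mult_mat_vec[OF Ac pow_carrier_mat[OF Ac] Sv])
  have xs: "x (Suc k) = P *\<^sub>v x k" for k
  proof -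
    have Ak: "A ^\<^sub>m k \<in> carrier_mat N N" using Ac by simp
    define u where "u = transpose_mat (A ^\<^sub>m k) *\<^sub>v v"
    have uc: "u \<in> carrier_vec N" unfolding u_def using Ak vN by simp
    have xk: "x k = ?S *\<^sub>v u" unfolding x_def u_def ..
    have u': "u = - (?S *\<^sub>v x k)" unfolding xk using Sigma_Sigma_vec[of u n] uc N_def by simp
    have "x (Suc k) = ?S *\<^sub>v (transpose_mat A *\<^sub>v u)"
      unfolding x_def u_def using Ac Ak vN
      by (simp add: transpose_mult[OF Ak Ac] assoc_mult_mat_vec[of "transpose_mat A" N N "transpose_mat (A ^\<^sub>m k)" N v])
    also have "\<dots> = - (?S *\<^sub>v (transpose_mat A *\<^sub>v (?S *\<^sub>v x k)))"
      unfolding u' using S Ac xc[of k]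
      by (simp add: mult_uminus_vec[of _ N N])
    also have "\<dots> = - (A *\<^sub>v x k - B *\<^sub>v (C *\<^sub>v x k))"
      unfolding A_def B_def using key_identity[OF G Gs C, of "x k"] xc[of k] N_def by simp
    also have "\<dots> = P *\<^sub>v x k"
    proof -
      have "A *\<^sub>v x k \<in> carrier_vec N" "B *\<^sub>v (C *\<^sub>v x k) \<in> carrier_vec N" using Ac Bc C' xc[of k] by simp_all
      then show ?thesis unfolding Pv[OF xc[of k]] by (rule vec_aux2)
    qed
    finally show ?thesis .
  qed
  have x0: "y 0 = x 0" unfolding x_def y_def using Sv vN Ac by simp
  have Cs: "C *\<^sub>v (c \<cdot>\<^sub>v w) = 0\<^sub>v M" if "C *\<^sub>v w = 0\<^sub>v M" "w \<in> carrier_vec N" for c w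
  proof -
    have "c \<cdot>\<^sub>v 0\<^sub>v M = (0\<^sub>v M :: real vec)" by (rule eq_vecI) auto
    then show ?thesis using mult_mat_vec[OF C' that(2)] that(1) by simp
  qed
  have equiv: "(\<forall>k<N. C *\<^sub>v y k = 0\<^sub>v M) \<longleftrightarrow> (\<forall>k<N. C *\<^sub>v x k = 0\<^sub>v M)"
  proof
    assume h: "\<forall>k<N. C *\<^sub>v y k = 0\<^sub>v M"
    show "\<forall>k<N. C *\<^sub>v x k = 0\<^sub>v M"
    proof (intro allI impI)
      fix k assume k: "k < N"
      have "x k = (-1)^k \<cdot>\<^sub>v y k"
        by (rule seq_alt[OF Ac Bc C' Pv yc xc ys xs x0[symmetric]]) (use h k in auto)
      then show "C *\<^sub>v x k = 0\<^sub>v M" using Cs h k yc by simp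
    qed
  next
    assume h: "\<forall>k<N. C *\<^sub>v x k = 0\<^sub>v M"
    show "\<forall>k<N. C *\<^sub>v y k = 0\<^sub>v M"
    proof (intro allI impI)
      fix k assume k: "k < N"
      have "y k = (-1)^k \<cdot>\<^sub>v x k"
        by (rule seq_alt[OF Pc Bc C' Av xc yc xs ys x0]) (use h k in auto)
      then show "C *\<^sub>v y k = 0\<^sub>v M" using Cs h k xc by simp
    qed
  qed
  define F where "F k = transpose_mat ((transpose_mat A) ^\<^sub>m k * transpose_mat C)" for k
  have Fc: "F k \<in> carrier_mat M N" for k
  proof -
    have "(transpose_mat A) ^\<^sub>m k \<in> carrier_mat N N" using Ac by simp
    then have "(transpose_mat A) ^\<^sub>m k * transpose_mat C \<in> carrier_mat N M" using CT by (rule mult_carrier_mat)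
    then show ?thesis unfolding F_def by simp
  qed
  have Fe: "F k = C * A ^\<^sub>m k" for k
  proof -
    have ATk: "(transpose_mat A) ^\<^sub>m k \<in> carrier_mat N N" using Ac by simp
    have "F k = C * transpose_mat ((transpose_mat A) ^\<^sub>m k)"
      unfolding F_def using transpose_mult[OF ATk CT] by simp
    also have "transpose_mat ((transpose_mat A) ^\<^sub>m k) = A ^\<^sub>m k"
      using transpose_pow[of "transpose_mat A" N k] Ac by simp
    finally show ?thesis .
  qed
  have O: "obsv_mat n m G C = mat (N*M) N (\<lambda>(i,j). F (i div M) $$ (i mod M, j))"
    unfolding obsv_mat_def F_def A_def N_def M_def ..
  have LHS: "?S *\<^sub>v v \<in> mat_kernel (obsv_mat n m G C) \<longleftrightarrow> (\<forall>k<N. C *\<^sub>v y k = 0\<^sub>v M)"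
  proof -
    have "?S *\<^sub>v v \<in> mat_kernel (obsv_mat n m G C) \<longleftrightarrow> ?S *\<^sub>v v \<in> carrier_vec N \<and> (\<forall>k<N. F k *\<^sub>v (?S *\<^sub>v v) = 0\<^sub>v M)"
      unfolding O by (rule block_kernel[OF Fc M0])
    moreover have "F k *\<^sub>v (?S *\<^sub>v v) = C *\<^sub>v y k" for k
      unfolding Fe y_def by (rule assoc_mult_mat_vec[OF C' pow_carrier_mat[OF Ac] Sv])
    ultimately show ?thesis using Sv by simp
  qed
  define F' where "F' k = transpose_mat (A ^\<^sub>m k * B)" for k
  have F'c: "F' k \<in> carrier_mat M N" for k
  proof -
    have "A ^\<^sub>m k \<in> carrier_mat N N" using Ac by simp
    then have "A ^\<^sub>m k * B \<in> carrier_mat N M" using Bc by (rule mult_carrier_mat)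
    then show ?thesis unfolding F'_def by simp
  qed
  have T: "transpose_mat (ctrb_mat n m G C) = mat (N*M) N (\<lambda>(i,j). F' (i div M) $$ (i mod M, j))"
  proof (rule eq_matI)
    fix i j assume i: "i < dim_row (mat (N*M) N (\<lambda>(i,j). F' (i div M) $$ (i mod M, j)))"
      and j: "j < dim_col (mat (N*M) N (\<lambda>(i,j). F' (i div M) $$ (i mod M, j)))"
    have r: "i mod M < M" using M0 by simp
    show "transpose_mat (ctrb_mat n m G C) $$ (i, j) = mat (N*M) N (\<lambda>(i,j). F' (i div M) $$ (i mod M, j)) $$ (i, j)"
      using i j r Ac Bc unfolding ctrb_mat_def F'_def A_def B_def N_def M_def
      by (simp add: A_def[symmetric] B_def[symmetric])
  qed (auto simp: ctrb_mat_def N_def M_def)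
  have F'v: "F' k *\<^sub>v v = ?S' *\<^sub>v (C *\<^sub>v x k)" for k
  proof -
    have Ak: "A ^\<^sub>m k \<in> carrier_mat N N" using Ac by simp
    have BT: "transpose_mat B = ?S' * (C * ?S)"
    proof -
      have SC: "?S * transpose_mat C \<in> carrier_mat N M" using S CT by (rule mult_carrier_mat)
      have "transpose_mat B = transpose_mat ?S' * transpose_mat (?S * transpose_mat C)"
        unfolding B_def sys_B_def by (rule transpose_mult[OF SC S'])
      also have "transpose_mat (?S * transpose_mat C) = C * transpose_mat ?S"
        using transpose_mult[OF S CT] by simp
      finally show ?thesis using C' unfolding N_def M_def by (simp add: Sigma_transpose)
    qed
    have uc: "transpose_mat (A ^\<^sub>m k) *\<^sub>v v \<in> carrier_vec N" using Ak vN by simp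
    have "F' k *\<^sub>v v = transpose_mat B *\<^sub>v (transpose_mat (A ^\<^sub>m k) *\<^sub>v v)"
      unfolding F'_def transpose_mult[OF Ak Bc] using Bc Ak vN by simp
    also have "\<dots> = ?S' *\<^sub>v (C *\<^sub>v x k)"
    proof -
      have CS: "C * ?S \<in> carrier_mat M N" using C' S by (rule mult_carrier_mat)
      show ?thesis unfolding BT x_def assoc_mult_mat_vec[OF S' CS uc] assoc_mult_mat_vec[OF C' S uc] ..
    qed
    finally show ?thesis .
  qed
  have S'z: "?S' *\<^sub>v w = 0\<^sub>v M \<longleftrightarrow> w = 0\<^sub>v M" if w: "w \<in> carrier_vec M" for w
  proof
    assume "?S' *\<^sub>v w = 0\<^sub>v M"
    hence "?S' *\<^sub>v (?S' *\<^sub>v w) = 0\<^sub>v M" using mult_zero_vec'[OF S'] by simp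
    hence "- w = 0\<^sub>v M" using Sigma_Sigma_vec[of w m] w M_def by simp
    thus "w = 0\<^sub>v M" using uminus_zero_vec_eq[OF w] by simp
  qed (use mult_zero_vec'[OF S'] in simp)
  have RHS: "v \<in> mat_kernel (transpose_mat (ctrb_mat n m G C)) \<longleftrightarrow> (\<forall>k<N. C *\<^sub>v x k = 0\<^sub>v M)"
  proof -
    have "v \<in> mat_kernel (transpose_mat (ctrb_mat n m G C)) \<longleftrightarrow> v \<in> carrier_vec N \<and> (\<forall>k<N. F' k *\<^sub>v v = 0\<^sub>v M)"
      unfolding T by (rule block_kernel[OF F'c M0])
    moreover have "C *\<^sub>v x k \<in> carrier_vec M" for k using C' xc[of k] by simp
    ultimately show ?thesis unfolding F'v using vN S'z by simp
  qed
  show ?thesis unfolding LHS RHS equiv ..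
qed

end
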